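(* Let $1\le k\le n$, $\sigma\in\mathcal D^\Delta_k$, $\tilde\sigma=\overline\psi_{n,k}(\sigma)=\tilde\sigma_1\cdots\tilde\sigma_k$, and let $\gamma$ be the increasing word $(s(\sigma)+1)(s(\sigma)+2)\cdots(n-e(\sigma))$. Then $\overline\psi_{n,n}$ restricts to a bijection from $\Delta^<_n(\sigma)=\{\pi\in B_n: dp(\pi)=\sigma,\ 0<\pi_n<n\}$ onto the set of shuffles $\alpha$ of $\tilde\sigma$ and $\gamma$ whose last letter is $\tilde\sigma_k$, and $\mathrm{fmaj}(\pi)=\mathrm{fmaj}(\overline\psi_{n,n}(\pi))$ for every $\pi\in\Delta^<_n(\sigma)$.
   Context: $B_n$ is the set of words $\pi=\pi_1\cdots\pi_n$ with $\pi_i\in\{\pm1,\dots,\pm n\}$ and $|\pi_1|\cdots|\pi_n|$ a permutation of $[n]$; $\mathcal D^\Delta_k$ is the set of $\sigma\in B_k$ with $\sigma_k>0$ and $\sigma_i\ne i$ for all $i$. For a word of nonzero integers with distinct absolute values $a_1<\dots<a_m$, its reduction replaces each letter $\pm a_j$ by $\pm j$; $dp(\pi)$ is the reduction of the subword of letters $\pi_i$ with $\pi_i\ne i$. For $\sigma\in B_k$, the letter $\sigma_j$ is a subcedant if $\sigma_j<j$, an excedant if $\sigma_j>j$, a fixed point if $\sigma_j=j$; $s(\sigma)$, $e(\sigma)$ are the numbers of subcedants and excedants. For $k\le n$, $\overline\psi_{n,k}(\sigma)$ is obtained from $\sigma$ by replacing the $i$-th smallest in absolute value subcedant $\sigma_j$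 by $\mathrm{sgn}(\sigma_j)\,i$ ($1\le i\le s(\sigma)$), the $i$-th smallest fixed point by $s(\sigma)+i$, and the $i$-th largest excedant by $n-i+1$ ($1\le i\le e(\sigma)$). A shuffle of two words with disjoint sets of letters is a word containing both as subsequences and consisting of exactly their letters. Order $\prec$: $-1\prec-2\prec\cdots\prec-N\prec1\prec\cdots\prec N$; $\mathrm{maj}_\prec(w)=\sum_{i:w_i\succ w_{i+1}}i$; $\mathrm{fmaj}(w)=2\mathrm{maj}_\prec(w)+\mathrm{neg}(w)$ with $\mathrm{neg}(w)$ the number of negative letters. *)

theory Defs
  imports Main
begin

text \<open>Words are int lists; positions are 1-based in the paper, so the letter
  pi_i is w ! (i - 1).\<close>

definition signed_perm :: "nat \<Rightarrow> int list \<Rightarrow> bool" where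
  "signed_perm n w \<longleftrightarrow> length w = n \<and> 0 \<notin> set w \<and>
     distinct (map abs w) \<and> set (map abs w) = {1..int n}"

definition B :: "nat \<Rightarrow> int list set" where
  "B n = {w. signed_perm n w}"

definition derangD :: "nat \<Rightarrow> int list set" where
  "derangD k = {w \<in> B k. last w > 0 \<and> (\<forall>i<k. w ! i \<noteq> int (i + 1))}"

definition red :: "int list \<Rightarrow> int list" where
  "red w = map (\<lambda>x. sgn x * int (card {y \<in> set (map abs w). y \<le> \<bar>x\<bar>})) w"

definition nonfixed_subword :: "int list \<Rightarrow> int list" where
  "nonfixed_subword w = map fst (filter (\<lambda>(x, i). x \<noteq> int i) (zip w [1..<length w + 1]))"

definition dp :: "int list \<Rightarrow> int list" where
  "dp w = red (nonfixed_subword w)"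

definition subc_pos :: "int list \<Rightarrow> nat set" where
  "subc_pos w = {j. j < length w \<and> w ! j < int (j + 1)}"
definition exc_pos :: "int list \<Rightarrow> nat set" where
  "exc_pos w = {j. j < length w \<and> w ! j > int (j + 1)}"
definition fix_pos :: "int list \<Rightarrow> nat set" where
  "fix_pos w = {j. j < length w \<and> w ! j = int (j + 1)}"

definition s_num :: "int list \<Rightarrow> nat" where "s_num w = card (subc_pos w)"
definition e_num :: "int list \<Rightarrow> nat" where "e_num w = card (exc_pos w)"

definition psi :: "nat \<Rightarrow> int list \<Rightarrow> int list" where
  "psi n w = map (\<lambda>j.
      if j \<in> subc_pos w then
        sgn (w ! j) * int (card {j' \<in> subc_pos w. \<bar>w ! j'\<bar> \<le> \<bar>w ! j\<bar>})
      else if j \<in> fix_pos w then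
        int (s_num w + card {j' \<in> fix_pos w. w ! j' \<le> w ! j})
      else
        int n - int (card {j' \<in> exc_pos w. w ! j' \<ge> w ! j}) + 1)
    [0..<length w]"

text \<open>The order -1 < -2 < ... < -N < 1 < ... < N.\<close>
definition prec :: "int \<Rightarrow> int \<Rightarrow> bool" where
  "prec x y \<longleftrightarrow> (if x < 0 \<and> y < 0 then \<bar>x\<bar> < \<bar>y\<bar>
                  else if x < 0 then 0 < y
                  else if y < 0 then False else x < y)"

definition maj_prec :: "int list \<Rightarrow> nat" where
  "maj_prec w = (\<Sum>i \<in> {i. 1 \<le> i \<and> i < length w \<and> prec (w ! i) (w ! (i - 1))}. i)"

definition neg :: "int list \<Rightarrow> nat" where
  "neg w = length (filter (\<lambda>x. x < 0) w)"

definition fmaj :: "int list \<Rightarrow> nat" where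
  "fmaj w = 2 * maj_prec w + neg w"

definition Delta_lt :: "nat \<Rightarrow> int list \<Rightarrow> int list set" where
  "Delta_lt n \<sigma> = {\<pi> \<in> B n. dp \<pi> = \<sigma> \<and> 0 < last \<pi> \<and> last \<pi> < int n}"

definition gamma_word :: "nat \<Rightarrow> int list \<Rightarrow> int list" where
  "gamma_word n \<sigma> = [int (s_num \<sigma>) + 1 .. int n - int (e_num \<sigma>)]"

end

theory Submission
  imports Defs
begin


lemma psi_length[simp]: "length (psi n w) = length w"
  by (simp add: psi_def)

lemma psi_nth: "j < length w \<Longrightarrow> psi n w ! j = (if j \<in> subc_pos w then
        sgn (w ! j) * int (card {j' \<in> subc_pos w. \<bar>w ! j'\<bar> \<le> \<bar>w ! j\<bar>})
      else if j \<in> fix_pos w then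
        int (s_num w + card {j' \<in> fix_pos w. w ! j' \<le> w ! j})
      else
        int n - int (card {j' \<in> exc_pos w. w ! j' \<ge> w ! j}) + 1)"
  by (simp add: psi_def)

lemma nonfixed_subword_conv:
  "nonfixed_subword w = map (nth w) (filter (\<lambda>i. w!i \<noteq> int (i+1)) [0..<length w])"
proof -
  have "zip w [1..<length w + 1] = map (\<lambda>i. (w!i, i+1)) [0..<length w]"
    by (rule nth_equalityI) (auto simp del: upt_Suc)
  then show ?thesis by (simp add: nonfixed_subword_def filter_map o_def)
qed

lemma red_length[simp]: "length (red v) = length v" by (simp add: red_def)

lemma red_nth: "j < length v \<Longrightarrow> red v ! j = sgn (v!j) * int (card {y \<in> abs ` set v. y \<le> \<bar>v!j\<bar>})"
  by (simp add: red_def)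



lemma card_rank_less_iff:
  fixes f :: "'a \<Rightarrow> int"
  assumes "finite S" "inj_on f S" "a \<in> S" "b \<in> S"
  shows "card {x\<in>S. f x \<le> f a} < card {x\<in>S. f x \<le> f b} \<longleftrightarrow> f a < f b"
proof
  assume "f a < f b"
  then have "{x\<in>S. f x \<le> f a} \<subset> {x\<in>S. f x \<le> f b}" using assms
  proof -
    have "b \<in> {x\<in>S. f x \<le> f b}" "b \<notin> {x\<in>S. f x \<le> f a}" using assms \<open>f a < f b\<close> by auto
    moreover have "{x\<in>S. f x \<le> f a} \<subseteq> {x\<in>S. f x \<le> f b}" using \<open>f a < f b\<close> by auto
    ultimately show ?thesis by blast
  qed
  then show "card {x\<in>S. f x \<le> f a} < card {x\<in>S. f x \<le> f b}"
    using assms by (intro psubset_card_mono) auto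
next
  assume c: "card {x\<in>S. f x \<le> f a} < card {x\<in>S. f x \<le> f b}"
  show "f a < f b"
  proof (rule ccontr)
    assume "\<not> f a < f b"
    then have "{x\<in>S. f x \<le> f b} \<subseteq> {x\<in>S. f x \<le> f a}" by auto
    then have "card {x\<in>S. f x \<le> f b} \<le> card {x\<in>S. f x \<le> f a}"
      using assms by (intro card_mono) auto
    with c show False by simp
  qed
qed

lemma card_rank_pos:
  fixes f :: "'a \<Rightarrow> int"
  assumes "finite S" "a \<in> S"
  shows "1 \<le> card {x\<in>S. f x \<le> f a}" "card {x\<in>S. f x \<le> f a} \<le> card S"
proof -
  have "a \<in> {x\<in>S. f x \<le> f a}" using assms by auto
  then show "1 \<le> card {x\<in>S. f x \<le> f a}" using assms
  proof -
    have "card {x\<in>S. f x \<le> f a} \<noteq> 0" using \<open>a \<in> {x\<in>S. f x \<le> f a}\<close> assms(1) by auto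
    then show ?thesis by simp
  qed
  show "card {x\<in>S. f x \<le> f a} \<le> card S" using assms by (intro card_mono) auto
qed

lemma card_rank_pos_ge:
  fixes f :: "'a \<Rightarrow> int"
  assumes "finite S" "a \<in> S"
  shows "1 \<le> card {x\<in>S. f x \<ge> f a}" "card {x\<in>S. f x \<ge> f a} \<le> card S"
  using card_rank_pos[OF assms, of "\<lambda>x. - f x"] by simp_all

lemma card_rank_ge_less_iff:
  fixes f :: "'a \<Rightarrow> int"
  assumes "finite S" "inj_on f S" "a \<in> S" "b \<in> S"
  shows "card {x\<in>S. f x \<ge> f a} < card {x\<in>S. f x \<ge> f b} \<longleftrightarrow> f b < f a"
proof -
  have "inj_on (\<lambda>x. - f x) S" using assms(2) by (auto simp: inj_on_def)
  from card_rank_less_iff[OF assms(1) this assms(3,4)] show ?thesis by simp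
qed

lemma sp_length: "signed_perm n w \<Longrightarrow> length w = n" by (simp add: signed_perm_def)

lemma sp_nz: "signed_perm n w \<Longrightarrow> j < length w \<Longrightarrow> w ! j \<noteq> 0"
  unfolding signed_perm_def using nth_mem[of j w] by force

lemma sp_abs_range: "signed_perm n w \<Longrightarrow> j < length w \<Longrightarrow> 1 \<le> \<bar>w ! j\<bar> \<and> \<bar>w ! j\<bar> \<le> int n"
proof -
  assume a: "signed_perm n w" "j < length w"
  then have "\<bar>w!j\<bar> \<in> set (map abs w)" by auto
  with a show ?thesis unfolding signed_perm_def by auto
qed

lemma sp_abs_inj: "signed_perm n w \<Longrightarrow> a < length w \<Longrightarrow> b < length w \<Longrightarrow> \<bar>w!a\<bar> = \<bar>w!b\<bar> \<Longrightarrow> a = b"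
  unfolding signed_perm_def using nth_eq_iff_index_eq[of "map abs w" a b] by simp

lemma sp_abs_surj: "signed_perm n w \<Longrightarrow> 1 \<le> v \<Longrightarrow> v \<le> int n \<Longrightarrow> \<exists>j<length w. \<bar>w!j\<bar> = v"
proof -
  assume a: "signed_perm n w" "1 \<le> v" "v \<le> int n"
  then have "v \<in> set (map abs w)" unfolding signed_perm_def by auto
  then show ?thesis by (auto simp: in_set_conv_nth)
qed

lemma pos_cases: "j < length w \<Longrightarrow> (j \<in> subc_pos w \<Longrightarrow> P) \<Longrightarrow> (j \<in> fix_pos w \<Longrightarrow> P) \<Longrightarrow> (j \<in> exc_pos w \<Longrightarrow> P) \<Longrightarrow> P"
  unfolding subc_pos_def fix_pos_def exc_pos_def using linorder_neqE[of "w!j" "int (j+1)"] by blast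

lemma pos_disj: "j \<in> subc_pos w \<Longrightarrow> j \<notin> fix_pos w" "j \<in> subc_pos w \<Longrightarrow> j \<notin> exc_pos w"
  "j \<in> fix_pos w \<Longrightarrow> j \<notin> exc_pos w"
  unfolding subc_pos_def fix_pos_def exc_pos_def by auto

lemma pos_finite[simp]: "finite (subc_pos w)" "finite (fix_pos w)" "finite (exc_pos w)"
  unfolding subc_pos_def fix_pos_def exc_pos_def by auto

lemma pos_union: "subc_pos w \<union> fix_pos w \<union> exc_pos w = {..<length w}"
  unfolding subc_pos_def fix_pos_def exc_pos_def by auto

lemma pos_card: "s_num w + card (fix_pos w) + e_num w = length w"
proof -
  have d1: "subc_pos w \<inter> fix_pos w = {}" using pos_disj by blast
  have d2: "(subc_pos w \<union> fix_pos w) \<inter> exc_pos w = {}" using pos_disj by blast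
  have "card (subc_pos w \<union> fix_pos w \<union> exc_pos w) = card (subc_pos w \<union> fix_pos w) + card (exc_pos w)"
    using d2 by (intro card_Un_disjoint) auto
  also have "card (subc_pos w \<union> fix_pos w) = card (subc_pos w) + card (fix_pos w)"
    using d1 by (intro card_Un_disjoint) auto
  finally show ?thesis using pos_union[of w] unfolding s_num_def e_num_def by simp
qed



definition cS where "cS w j = card {j' \<in> subc_pos w. \<bar>w ! j'\<bar> \<le> \<bar>w ! j\<bar>}"
definition cF where "cF w j = card {j' \<in> fix_pos w. w ! j' \<le> w ! j}"
definition cE where "cE w j = card {j' \<in> exc_pos w. w ! j' \<ge> w ! j}"

lemma psi_subc: "j \<in> subc_pos w \<Longrightarrow> psi n w ! j = sgn (w!j) * int (cS w j)"
  by (subst psi_nth) (auto simp: subc_pos_def cS_def)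
lemma psi_fix: "j \<in> fix_pos w \<Longrightarrow> psi n w ! j = int (s_num w + cF w j)"
  by (subst psi_nth) (auto simp: subc_pos_def fix_pos_def cF_def)
lemma psi_exc: "j \<in> exc_pos w \<Longrightarrow> psi n w ! j = int n - int (cE w j) + 1"
  by (subst psi_nth) (auto simp: subc_pos_def fix_pos_def exc_pos_def cE_def)

lemma cS_bounds: "j \<in> subc_pos w \<Longrightarrow> 1 \<le> cS w j \<and> cS w j \<le> s_num w"
  unfolding cS_def s_num_def using card_rank_pos[of "subc_pos w" j "\<lambda>j. \<bar>w!j\<bar>"] by simp
lemma cF_bounds: "j \<in> fix_pos w \<Longrightarrow> 1 \<le> cF w j \<and> cF w j \<le> card (fix_pos w)"
  unfolding cF_def using card_rank_pos[of "fix_pos w" j "\<lambda>j. w!j"] by simp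
lemma cE_bounds: "j \<in> exc_pos w \<Longrightarrow> 1 \<le> cE w j \<and> cE w j \<le> e_num w"
  unfolding cE_def e_num_def using card_rank_pos_ge[of "exc_pos w" j "\<lambda>j. w!j"] by simp

lemma cS_less_iff: "signed_perm m w \<Longrightarrow> a \<in> subc_pos w \<Longrightarrow> b \<in> subc_pos w \<Longrightarrow>
   cS w a < cS w b \<longleftrightarrow> \<bar>w!a\<bar> < \<bar>w!b\<bar>"
  unfolding cS_def
  apply (rule card_rank_less_iff)
  using sp_abs_inj[of m w] by (auto simp: inj_on_def subc_pos_def)

lemma cE_less_iff: "signed_perm m w \<Longrightarrow> a \<in> exc_pos w \<Longrightarrow> b \<in> exc_pos w \<Longrightarrow>
   cE w a < cE w b \<longleftrightarrow> w!b < w!a"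
  unfolding cE_def
  apply (rule card_rank_ge_less_iff)
  using sp_abs_inj[of m w] by (auto simp: inj_on_def exc_pos_def)

lemma cF_mono: "a \<in> fix_pos w \<Longrightarrow> b \<in> fix_pos w \<Longrightarrow> w!a \<le> w!b \<Longrightarrow> cF w a \<le> cF w b"
  unfolding cF_def by (intro card_mono) auto

lemma pos_bound: "j \<in> subc_pos w \<Longrightarrow> j < length w" "j \<in> fix_pos w \<Longrightarrow> j < length w" "j \<in> exc_pos w \<Longrightarrow> j < length w"
  by (auto simp: subc_pos_def fix_pos_def exc_pos_def)

lemma prec_alt: "prec x y \<longleftrightarrow> (x < 0 \<and> y < 0 \<and> y < x) \<or> (x < 0 \<and> 0 \<le> y \<and> 0 < y) \<or> (0 \<le> x \<and> 0 \<le> y \<and> x < y)"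
  unfolding prec_def by auto



lemma psi_subc': assumes "signed_perm m w" "j \<in> subc_pos w"
  shows "(w!j < 0 \<and> psi n w ! j = - int (cS w j)) \<or> (w!j > 0 \<and> psi n w ! j = int (cS w j))"
proof -
  have "w!j \<noteq> 0" using sp_nz[OF assms(1) pos_bound(1)[OF assms(2)]] .
  then show ?thesis using psi_subc[OF assms(2), of n] by (auto simp: sgn_if)
qed

lemma descent_pres:
  assumes sp: "signed_perm n w" and ab: "Suc a < n"
  shows "prec (psi n w ! Suc a) (psi n w ! a) \<longleftrightarrow> prec (w ! Suc a) (w ! a)"
proof -
  have len: "length w = n" using sp by (simp add: sp_length)
  have al: "a < length w" "Suc a < length w" using ab len by auto
  have tot: "s_num w + card (fix_pos w) + e_num w = n" using pos_card[of w] len by simp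
  have ne: "\<bar>w!a\<bar> \<noteq> \<bar>w!Suc a\<bar>" using sp_abs_inj[OF sp al] by auto
  show ?thesis
  proof (rule pos_cases[OF al(1)]; rule pos_cases[OF al(2)])
    assume A: "a \<in> subc_pos w" and B: "Suc a \<in> subc_pos w"
    have lt: "cS w a < cS w (Suc a) \<longleftrightarrow> \<bar>w!a\<bar> < \<bar>w!Suc a\<bar>" "cS w (Suc a) < cS w a \<longleftrightarrow> \<bar>w!Suc a\<bar> < \<bar>w!a\<bar>"
      using cS_less_iff[OF sp A B] cS_less_iff[OF sp B A] by auto
    show ?thesis using psi_subc'[OF sp A, of n] psi_subc'[OF sp B, of n] cS_bounds[OF A] cS_bounds[OF B] lt ne
      apply (elim disjE conjE)
      by (simp_all add: prec_alt)
  next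
    assume A: "a \<in> subc_pos w" and B: "Suc a \<in> fix_pos w"
    have "w!a < int (a+1)" "w!Suc a = int (Suc a + 1)" using A B by (auto simp: subc_pos_def fix_pos_def)
    then show ?thesis using psi_subc'[OF sp A, of n] psi_fix[OF B, of n] cS_bounds[OF A] cF_bounds[OF B]
      apply (elim disjE conjE)
      by (simp_all add: prec_alt)
  next
    assume A: "a \<in> subc_pos w" and B: "Suc a \<in> exc_pos w"
    have "w!a < int (a+1)" "w!Suc a > int (Suc a + 1)" using A B by (auto simp: subc_pos_def exc_pos_def)
    then show ?thesis using psi_subc'[OF sp A, of n] psi_exc[OF B, of n] cS_bounds[OF A] cE_bounds[OF B] tot
      apply (elim disjE conjE)
      by (simp_all add: prec_alt)
  next
    assume A: "a \<in> fix_pos w" and B: "Suc a \<in> subc_pos w"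
    have "w!Suc a < int (Suc a+1)" "w!a = int (a + 1)" using A B by (auto simp: subc_pos_def fix_pos_def)
    then show ?thesis using psi_subc'[OF sp B, of n] psi_fix[OF A, of n] cS_bounds[OF B] cF_bounds[OF A] ne
      apply (elim disjE conjE)
      by (simp_all add: prec_alt)
  next
    assume A: "a \<in> fix_pos w" and B: "Suc a \<in> fix_pos w"
    have "cF w a \<le> cF w (Suc a)" using cF_mono[OF A B] A B by (auto simp: fix_pos_def)
    moreover have "w!Suc a = int (Suc a+1)" "w!a = int (a + 1)" using A B by (auto simp: fix_pos_def)
    ultimately show ?thesis using psi_fix[OF A, of n] psi_fix[OF B, of n]
      by (simp add: prec_alt)
  next
    assume A: "a \<in> fix_pos w" and B: "Suc a \<in> exc_pos w"
    have "w!Suc a > int (Suc a+1)" "w!a = int (a + 1)" using A B by (auto simp: exc_pos_def fix_pos_def)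
    then show ?thesis using psi_exc[OF B, of n] psi_fix[OF A, of n] cE_bounds[OF B] cF_bounds[OF A] tot
      by (simp add: prec_alt)
  next
    assume A: "a \<in> exc_pos w" and B: "Suc a \<in> subc_pos w"
    have "w!Suc a < int (Suc a+1)" "w!a > int (a + 1)" using A B by (auto simp: exc_pos_def subc_pos_def)
    then show ?thesis using psi_subc'[OF sp B, of n] psi_exc[OF A, of n] cS_bounds[OF B] cE_bounds[OF A] tot
      apply (elim disjE conjE)
      by (simp_all add: prec_alt)
  next
    assume A: "a \<in> exc_pos w" and B: "Suc a \<in> fix_pos w"
    have "w!Suc a = int (Suc a+1)" "w!a > int (a + 1)" using A B by (auto simp: exc_pos_def fix_pos_def)
    then show ?thesis using psi_exc[OF A, of n] psi_fix[OF B, of n] cE_bounds[OF A] cF_bounds[OF B] tot ne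
      by (simp add: prec_alt)
  next
    assume A: "a \<in> exc_pos w" and B: "Suc a \<in> exc_pos w"
    have lt: "cE w a < cE w (Suc a) \<longleftrightarrow> w!Suc a < w!a" "cE w (Suc a) < cE w a \<longleftrightarrow> w!a < w!Suc a"
      using cE_less_iff[OF sp A B] cE_less_iff[OF sp B A] by auto
    have "w!Suc a > int (Suc a+1)" "w!a > int (a + 1)" using A B by (auto simp: exc_pos_def)
    then show ?thesis using psi_exc[OF A, of n] psi_exc[OF B, of n] cE_bounds[OF A] cE_bounds[OF B] tot lt
      by (simp add: prec_alt) linarith
  qed
qed

lemma neg_pres:
  assumes sp: "signed_perm m w" and j: "j < length w" and en: "e_num w \<le> n"
  shows "psi n w ! j < 0 \<longleftrightarrow> w ! j < 0"
proof (rule pos_cases[OF j])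
  assume A: "j \<in> subc_pos w" show ?thesis using psi_subc'[OF sp A, of n] cS_bounds[OF A] by auto
next
  assume A: "j \<in> fix_pos w" show ?thesis using psi_fix[OF A, of n] A by (auto simp: fix_pos_def)
next
  assume A: "j \<in> exc_pos w" show ?thesis using psi_exc[OF A, of n] cE_bounds[OF A] en A by (auto simp: exc_pos_def)
qed

lemma fmaj_pres:
  assumes sp: "signed_perm n w"
  shows "fmaj (psi n w) = fmaj w"
proof -
  have len: "length w = n" using sp by (simp add: sp_length)
  have en: "e_num w \<le> n" using pos_card[of w] len by simp
  have "neg (psi n w) = neg w"
    unfolding neg_def length_filter_conv_card psi_length
    by (rule arg_cong[where f=card], rule Collect_cong) (use neg_pres[OF sp _ en] in blast)
  moreover have "maj_prec (psi n w) = maj_prec w"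
  proof -
    have "{i. 1 \<le> i \<and> i < length (psi n w) \<and> prec (psi n w ! i) (psi n w ! (i - 1))}
        = {i. 1 \<le> i \<and> i < length w \<and> prec (w ! i) (w ! (i - 1))}"
    proof (intro Collect_cong)
      fix i
      show "(1 \<le> i \<and> i < length (psi n w) \<and> prec (psi n w ! i) (psi n w ! (i - 1))) =
            (1 \<le> i \<and> i < length w \<and> prec (w ! i) (w ! (i - 1)))"
      proof (cases "1 \<le> i \<and> i < n")
        case True
        then obtain a where "i = Suc a" by (cases i) auto
        then show ?thesis using descent_pres[OF sp, of a] True len by simp
      qed (use len in auto)
    qed
    then show ?thesis unfolding maj_prec_def by simp
  qed
  ultimately show ?thesis unfolding fmaj_def by simp
qed



lemma ss_less_iff: "sorted_wrt (<) (xs::nat list) \<Longrightarrow> a < length xs \<Longrightarrow> b < length xs \<Longrightarrow> xs!a < xs!b \<longleftrightarrow> a < b"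
  by (metis not_less_iff_gr_or_eq order.asym sorted_wrt_nth_less)

lemma ss_le_iff: "sorted_wrt (<) (xs::nat list) \<Longrightarrow> a < length xs \<Longrightarrow> b < length xs \<Longrightarrow> xs!a \<le> xs!b \<longleftrightarrow> a \<le> b"
  using ss_less_iff[of xs b a] by (simp add: not_less[symmetric])

lemma ss_rank_less:
  assumes ss: "sorted_wrt (<) (xs::nat list)" and j: "j < length xs"
  shows "card {x\<in>set xs. x < xs!j} = j"
proof -
  have d: "distinct xs" using ss strict_sorted_iff by blast
  have "{x\<in>set xs. x < xs!j} = nth xs ` {..<j}"
  proof (intro equalityI subsetI)
    fix x assume "x \<in> {x\<in>set xs. x < xs!j}"
    then obtain i where i: "i < length xs" "x = xs!i" "xs!i < xs!j" by (auto simp: in_set_conv_nth)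
    then have "i < j" using ss_less_iff[OF ss i(1) j] by simp
    then show "x \<in> nth xs ` {..<j}" using i by auto
  next
    fix x assume "x \<in> nth xs ` {..<j}"
    then obtain i where i: "i < j" "x = xs!i" by auto
    then show "x \<in> {x\<in>set xs. x < xs!j}" using ss_less_iff[OF ss _ j, of i] j by auto
  qed
  moreover have "inj_on (nth xs) {..<j}" using d j by (intro inj_on_nth) auto
  ultimately show ?thesis by (simp add: card_image)
qed

lemma ss_rank_le:
  assumes ss: "sorted_wrt (<) (xs::nat list)" and j: "j < length xs"
  shows "card {x\<in>set xs. x \<le> xs!j} = Suc j"
proof -
  have "{x\<in>set xs. x \<le> xs!j} = insert (xs!j) {x\<in>set xs. x < xs!j}" using j by auto
  then show ?thesis using ss_rank_less[OF assms] by simp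
qed

lemma filter_upt_ss: "sorted_wrt (<) (filter P [0..<n])" by (rule sorted_wrt_filter) simp

lemma list_eq_by_filters:
  "length xs = length ys \<Longrightarrow> (\<forall>i<length xs. P (xs!i) \<longleftrightarrow> P (ys!i)) \<Longrightarrow>
   filter P xs = filter P ys \<Longrightarrow> filter (\<lambda>x. \<not> P x) xs = filter (\<lambda>x. \<not> P x) ys \<Longrightarrow> xs = ys"
proof (induction xs arbitrary: ys)
  case Nil then show ?case by simp
next
  case (Cons x xs)
  then obtain y ys' where y: "ys = y # ys'" by (cases ys) auto
  have px: "P x \<longleftrightarrow> P y" using Cons.prems(2) y by force
  have ih: "\<forall>i<length xs. P (xs!i) \<longleftrightarrow> P (ys'!i)" using Cons.prems(2) y by force
  show ?case
  proof (cases "P x")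
    case True
    then show ?thesis using Cons.prems Cons.IH[of ys'] px ih y by auto
  next
    case False
    then show ?thesis using Cons.prems Cons.IH[of ys'] px ih y by auto
  qed
qed

lemma filter_upt_nth_rank:
  assumes "i < n" "P i"
  shows "filter P [0..<n] ! card {i'. i' < i \<and> P i'} = i"
proof -
  have "[0..<n] = [0..<i] @ i # [Suc i..<n]" using assms(1)
    by (metis upt_conv_Cons upt_add_eq_append zero_le le_add_diff_inverse less_imp_le_nat)
  then have "filter P [0..<n] = filter P [0..<i] @ i # filter P [Suc i..<n]" using assms(2) by simp
  moreover have "length (filter P [0..<i]) = card {i'. i' < i \<and> P i'}"
    by (auto simp: length_filter_conv_card intro!: arg_cong[where f=card])
  ultimately show ?thesis by (simp add: nth_append)
qed

lemma filter_upt_rank_nth: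
  assumes "j < length (filter P [0..<n])"
  shows "card {i'. i' < filter P [0..<n] ! j \<and> P i'} = j"
proof -
  let ?L = "filter P [0..<n]"
  have "{i'. i' < ?L ! j \<and> P i'} = {x\<in>set ?L. x < ?L!j}"
  proof -
    have "?L ! j \<in> set ?L" using assms by (rule nth_mem)
    then have "?L ! j \<in> {x\<in>set [0..<n]. P x}" by (simp only: set_filter)
    then have "?L ! j < n" "P (?L ! j)" by simp_all
    then show ?thesis by auto
  qed
  then show ?thesis using ss_rank_less[OF filter_upt_ss assms] by simp
qed



definition Pv :: "nat \<Rightarrow> int list \<Rightarrow> int \<Rightarrow> bool" where
  "Pv n \<sigma> x \<longleftrightarrow> \<not> (int (s_num \<sigma>) + 1 \<le> x \<and> x \<le> int n - int (e_num \<sigma>))"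

locale sg =
  fixes n k :: nat and \<sigma> :: "int list"
  assumes der: "\<sigma> \<in> derangD k" and k1: "1 \<le> k" and kn: "k \<le> n"
begin
lemma sig_sp: "signed_perm k \<sigma>" using der by (simp add: derangD_def B_def)
lemma len_sig: "length \<sigma> = k" using sig_sp by (simp add: sp_length)
lemma sig_der: "i < k \<Longrightarrow> \<sigma>!i \<noteq> int (i+1)" using der by (simp add: derangD_def)
lemma sig_last: "last \<sigma> > 0" using der by (simp add: derangD_def)

lemma fix_sig: "fix_pos \<sigma> = {}" using sig_der len_sig by (auto simp: fix_pos_def)

lemma sub_sig_k: "subc_pos \<sigma> \<subseteq> {..<k}" "exc_pos \<sigma> \<subseteq> {..<k}"
  using len_sig by (auto simp: subc_pos_def exc_pos_def)

lemma sig_k: "s_num \<sigma> + e_num \<sigma> = k" using pos_card[of \<sigma>] fix_sig len_sig by simp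

lemma ne_k: "s_num \<sigma> + e_num \<sigma> \<le> n" using sig_k kn by simp

lemma psi_sig_Pv: "x \<in> set (psi n \<sigma>) \<Longrightarrow> Pv n \<sigma> x"
proof -
  assume "x \<in> set (psi n \<sigma>)"
  then obtain j where j: "j < k" "x = psi n \<sigma> ! j" using len_sig by (auto simp: in_set_conv_nth)
  show ?thesis
  proof (rule pos_cases[of j \<sigma>])
    show "j < length \<sigma>" using j len_sig by simp
  next
    assume A: "j \<in> subc_pos \<sigma>"
    show ?thesis using psi_subc'[OF sig_sp A, of n] cS_bounds[OF A] j unfolding Pv_def by auto
  next
    assume "j \<in> fix_pos \<sigma>" then show ?thesis using fix_sig by simp
  next
    assume A: "j \<in> exc_pos \<sigma>"
    show ?thesis using psi_exc[OF A, of n] cE_bounds[OF A] j unfolding Pv_def by auto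
  qed
qed

end

locale fw = sg +
  fixes \<pi> :: "int list"
  assumes sp: "signed_perm n \<pi>" and dpe: "dp \<pi> = \<sigma>"
begin

definition L where "L = filter (\<lambda>i. \<pi>!i \<noteq> int (i+1)) [0..<n]"
definition A0 where "A0 = (\<lambda>i. int (i+1)) ` set L"
definition phi where "phi y = card {a\<in>A0. a \<le> y}"

lemma len_pi: "length \<pi> = n" using sp by (simp add: sp_length)
lemma ns: "nonfixed_subword \<pi> = map (nth \<pi>) L"
  unfolding nonfixed_subword_conv L_def len_pi ..

lemma sig_eq: "\<sigma> = red (map (nth \<pi>) L)" using dpe ns by (simp add: dp_def)

lemma kL: "length L = k" using sig_eq len_sig by simp

lemma L_ss: "sorted_wrt (<) L" unfolding L_def by (rule filter_upt_ss)
lemma L_dist: "distinct L" using L_ss strict_sorted_iff by blast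
lemma L_set: "set L = {i. i < n \<and> \<pi>!i \<noteq> int (i+1)}" unfolding L_def by auto
lemma L_nth: "j < k \<Longrightarrow> L!j < n \<and> \<pi>!(L!j) \<noteq> int (L!j+1)"
  using nth_mem[of j L] kL L_set by auto
lemma A_eq: "abs ` set (map (nth \<pi>) L) = A0"
proof (intro equalityI subsetI)
  fix y assume "y \<in> abs ` set (map (nth \<pi>) L)"
  then obtain i where i: "i \<in> set L" "y = \<bar>\<pi>!i\<bar>" by auto
  then have il: "i < n" "\<pi>!i \<noteq> int (i+1)" using L_set by auto
  have r: "1 \<le> y" "y \<le> int n" using sp_abs_range[OF sp, of i] il len_pi i by auto
  define i' where "i' = nat y - 1"
  have yi: "y = int (i'+1)" "i' < n" using r unfolding i'_def by auto
  have "\<pi>!i' \<noteq> int (i'+1)"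
  proof
    assume h: "\<pi>!i' = int (i'+1)"
    then have "\<bar>\<pi>!i'\<bar> = \<bar>\<pi>!i\<bar>" using yi i by simp
    then have "i' = i" using sp_abs_inj[OF sp] yi il len_pi by auto
    then show False using h il by simp
  qed
  then have "i' \<in> set L" using L_set yi by auto
  then show "y \<in> A0" unfolding A0_def using yi by auto
next
  fix y assume "y \<in> A0"
  then obtain i where i: "i \<in> set L" "y = int (i+1)" unfolding A0_def by auto
  then have il: "i < n" "\<pi>!i \<noteq> int (i+1)" using L_set by auto
  obtain i' where i': "i' < length \<pi>" "\<bar>\<pi>!i'\<bar> = y" using sp_abs_surj[OF sp, of y] i il by auto
  have "\<pi>!i' \<noteq> int (i'+1)"
  proof
    assume h: "\<pi>!i' = int (i'+1)"
    then have "i' = i" using i' i by simp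
    then show False using h il by simp
  qed
  then have "i' \<in> set L" using L_set i' len_pi by auto
  then show "y \<in> abs ` set (map (nth \<pi>) L)" using i' by force
qed

lemma sig_nth: "j < k \<Longrightarrow> \<sigma>!j = sgn (\<pi>!(L!j)) * int (phi \<bar>\<pi>!(L!j)\<bar>)"
proof -
  assume j: "j < k"
  have "\<sigma>!j = red (map (nth \<pi>) L) ! j" using sig_eq by simp
  also have "\<dots> = sgn (\<pi>!(L!j)) * int (card {y \<in> abs ` set (map (nth \<pi>) L). y \<le> \<bar>\<pi>!(L!j)\<bar>})"
    using j kL by (simp add: red_nth)
  finally show ?thesis unfolding A_eq phi_def .
qed

lemma A0_fin: "finite A0" unfolding A0_def by simp

lemma absL_in_A0: "j < k \<Longrightarrow> \<bar>\<pi>!(L!j)\<bar> \<in> A0"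
  using A_eq nth_mem[of j L] kL by force

lemma phi_L: "j < k \<Longrightarrow> phi (int (L!j+1)) = Suc j"
proof -
  assume j: "j < k"
  have "{a\<in>A0. a \<le> int (L!j+1)} = (\<lambda>i. int (i+1)) ` {x\<in>set L. x \<le> L!j}"
    unfolding A0_def by auto
  moreover have "inj_on (\<lambda>i. int (i+1)) {x\<in>set L. x \<le> L!j}" by (auto simp: inj_on_def)
  ultimately have "phi (int (L!j+1)) = card {x\<in>set L. x \<le> L!j}" unfolding phi_def by (simp add: card_image)
  then show ?thesis using ss_rank_le[OF L_ss, of j] j kL by simp
qed

lemma phi_less_iff: "a \<in> A0 \<Longrightarrow> b \<in> A0 \<Longrightarrow> phi a < phi b \<longleftrightarrow> a < b"
  unfolding phi_def using card_rank_less_iff[OF A0_fin, of "\<lambda>x. x" a b] by simp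

lemma phi_pos: "a \<in> A0 \<Longrightarrow> 1 \<le> phi a"
  unfolding phi_def using card_rank_pos[OF A0_fin, of a "\<lambda>x. x"] by simp

lemma LA0: "j < k \<Longrightarrow> int (L!j+1) \<in> A0" unfolding A0_def using kL by auto

end


context fw begin

lemma piL_nz: "j < k \<Longrightarrow> \<pi>!(L!j) \<noteq> 0" using sp_nz[OF sp, of "L!j"] L_nth len_pi by auto

lemma sig_abs: "j < k \<Longrightarrow> \<bar>\<sigma>!j\<bar> = int (phi \<bar>\<pi>!(L!j)\<bar>)"
  using sig_nth piL_nz by (auto simp: abs_mult sgn_if)
lemma sig_sgn: "j < k \<Longrightarrow> sgn (\<sigma>!j) = sgn (\<pi>!(L!j))"
proof -
  assume j: "j < k"
  have "phi \<bar>\<pi>!(L!j)\<bar> > 0" using phi_pos[OF absL_in_A0[OF j]] by simp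
  then have "sgn (int (phi \<bar>\<pi>!(L!j)\<bar>)) = 1" by simp
  then show ?thesis unfolding sig_nth[OF j] sgn_mult by simp
qed

lemma sig_neg: "j < k \<Longrightarrow> \<pi>!(L!j) < 0 \<Longrightarrow> \<sigma>!j = - int (phi \<bar>\<pi>!(L!j)\<bar>)"
  using sig_nth by (auto simp: sgn_if)
lemma sig_pos: "j < k \<Longrightarrow> \<pi>!(L!j) > 0 \<Longrightarrow> \<sigma>!j = int (phi (\<pi>!(L!j)))"
  using sig_nth by (auto simp: sgn_if)

lemma T_sub: "j < k \<Longrightarrow> j \<in> subc_pos \<sigma> \<longleftrightarrow> L!j \<in> subc_pos \<pi>"
proof -
  assume j: "j < k"
  have ln: "L!j < n" using L_nth j by simp
  show ?thesis
  proof (cases "\<pi>!(L!j) < 0")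
    case True
    then show ?thesis using sig_neg[OF j True] j ln len_sig len_pi by (auto simp: subc_pos_def)
  next
    case False
    then have p: "\<pi>!(L!j) > 0" using piL_nz[OF j] by simp
    have "\<sigma>!j < int (j+1) \<longleftrightarrow> phi (\<pi>!(L!j)) < phi (int (L!j+1))"
      unfolding sig_pos[OF j p] phi_L[OF j] by (simp only: of_nat_less_iff) simp
    also have "\<dots> \<longleftrightarrow> \<pi>!(L!j) < int (L!j+1)"
      using phi_less_iff[OF _ LA0[OF j]] absL_in_A0[OF j] p by simp
    finally show ?thesis using j ln len_sig len_pi by (auto simp: subc_pos_def)
  qed
qed

lemma T_exc: "j < k \<Longrightarrow> j \<in> exc_pos \<sigma> \<longleftrightarrow> L!j \<in> exc_pos \<pi>"
proof -
  assume j: "j < k"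
  have ln: "L!j < n" using L_nth j by simp
  show ?thesis
  proof (cases "\<pi>!(L!j) < 0")
    case True
    then show ?thesis using sig_neg[OF j True] j ln len_sig len_pi by (auto simp: exc_pos_def)
  next
    case False
    then have p: "\<pi>!(L!j) > 0" using piL_nz[OF j] by simp
    have "\<sigma>!j > int (j+1) \<longleftrightarrow> phi (int (L!j+1)) < phi (\<pi>!(L!j))"
      unfolding sig_pos[OF j p] phi_L[OF j] by (simp only: of_nat_less_iff) simp
    also have "\<dots> \<longleftrightarrow> int (L!j+1) < \<pi>!(L!j)"
      using phi_less_iff[OF LA0[OF j]] absL_in_A0[OF j] p by simp
    finally show ?thesis using j ln len_sig len_pi by (auto simp: exc_pos_def)
  qed
qed

lemma setL_conv: "set L = nth L ` {..<k}" using kL by (auto simp: in_set_conv_nth)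

lemma inj_L: "inj_on (nth L) {..<k}" using L_dist kL by (intro inj_on_nth) auto

lemma subc_pi: "subc_pos \<pi> = nth L ` subc_pos \<sigma>"
proof (intro equalityI subsetI)
  fix i assume i: "i \<in> subc_pos \<pi>"
  then have "i \<in> set L" using L_set by (auto simp: subc_pos_def len_pi)
  then obtain j where "j < k" "i = L!j" using setL_conv by auto
  then show "i \<in> nth L ` subc_pos \<sigma>" using T_sub i by auto
next
  fix i assume "i \<in> nth L ` subc_pos \<sigma>"
  then obtain j where "j \<in> subc_pos \<sigma>" "i = L!j" by auto
  then show "i \<in> subc_pos \<pi>" using T_sub len_sig by (auto simp: subc_pos_def)
qed

lemma exc_pi: "exc_pos \<pi> = nth L ` exc_pos \<sigma>"
proof (intro equalityI subsetI)
  fix i assume i: "i \<in> exc_pos \<pi>"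
  then have "i \<in> set L" using L_set by (auto simp: exc_pos_def len_pi)
  then obtain j where "j < k" "i = L!j" using setL_conv by auto
  then show "i \<in> nth L ` exc_pos \<sigma>" using T_exc i by auto
next
  fix i assume "i \<in> nth L ` exc_pos \<sigma>"
  then obtain j where "j \<in> exc_pos \<sigma>" "i = L!j" by auto
  then show "i \<in> exc_pos \<pi>" using T_exc len_sig by (auto simp: exc_pos_def)
qed

lemma s_eq: "s_num \<pi> = s_num \<sigma>"
  unfolding s_num_def subc_pi using inj_L sub_sig_k by (intro card_image) (blast intro: inj_on_subset)
lemma e_eq: "e_num \<pi> = e_num \<sigma>"
  unfolding e_num_def exc_pi using inj_L sub_sig_k by (intro card_image) (blast intro: inj_on_subset)

lemma abs_le_iff: "j < k \<Longrightarrow> j' < k \<Longrightarrow> \<bar>\<sigma>!j'\<bar> \<le> \<bar>\<sigma>!j\<bar> \<longleftrightarrow> \<bar>\<pi>!(L!j')\<bar> \<le> \<bar>\<pi>!(L!j)\<bar>"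
  using sig_abs phi_less_iff[OF absL_in_A0 absL_in_A0, of j j'] by (simp add: not_less[symmetric])

lemma pos_le_iff: "j < k \<Longrightarrow> j' < k \<Longrightarrow> \<pi>!(L!j) > 0 \<Longrightarrow> \<pi>!(L!j') > 0 \<Longrightarrow>
   \<sigma>!j' \<ge> \<sigma>!j \<longleftrightarrow> \<pi>!(L!j') \<ge> \<pi>!(L!j)"
  using sig_pos phi_less_iff[OF absL_in_A0 absL_in_A0, of j' j] by (simp add: not_less[symmetric])

lemma cS_eq: "j \<in> subc_pos \<sigma> \<Longrightarrow> cS \<pi> (L!j) = cS \<sigma> j"
proof -
  assume j: "j \<in> subc_pos \<sigma>"
  then have jk: "j < k" using sub_sig_k by auto
  have "{j' \<in> subc_pos \<pi>. \<bar>\<pi>!j'\<bar> \<le> \<bar>\<pi>!(L!j)\<bar>} = nth L ` {j' \<in> subc_pos \<sigma>. \<bar>\<sigma>!j'\<bar> \<le> \<bar>\<sigma>!j\<bar>}"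
    unfolding subc_pi using abs_le_iff[OF jk] sub_sig_k by auto
  moreover have "inj_on (nth L) {j' \<in> subc_pos \<sigma>. \<bar>\<sigma>!j'\<bar> \<le> \<bar>\<sigma>!j\<bar>}"
    using inj_L sub_sig_k by (blast intro: inj_on_subset)
  ultimately show ?thesis unfolding cS_def by (simp add: card_image)
qed

lemma exc_pos_val: "j \<in> exc_pos \<sigma> \<Longrightarrow> \<pi>!(L!j) > 0"
  using T_exc[of j] sub_sig_k by (auto simp: exc_pos_def)

lemma cE_eq: "j \<in> exc_pos \<sigma> \<Longrightarrow> cE \<pi> (L!j) = cE \<sigma> j"
proof -
  assume j: "j \<in> exc_pos \<sigma>"
  then have jk: "j < k" using sub_sig_k by auto
  have "{j' \<in> exc_pos \<pi>. \<pi>!j' \<ge> \<pi>!(L!j)} = nth L ` {j' \<in> exc_pos \<sigma>. \<sigma>!j' \<ge> \<sigma>!j}"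
    unfolding exc_pi using pos_le_iff[OF jk] sub_sig_k exc_pos_val j by auto
  moreover have "inj_on (nth L) {j' \<in> exc_pos \<sigma>. \<sigma>!j' \<ge> \<sigma>!j}"
    using inj_L sub_sig_k by (blast intro: inj_on_subset)
  ultimately show ?thesis unfolding cE_def by (simp add: card_image)
qed

lemma psi_L: "j < k \<Longrightarrow> psi n \<pi> ! (L!j) = psi n \<sigma> ! j"
proof -
  assume j: "j < k"
  show ?thesis
  proof (rule pos_cases[of j \<sigma>])
    show "j < length \<sigma>" using j len_sig by simp
  next
    assume A: "j \<in> subc_pos \<sigma>"
    then have B: "L!j \<in> subc_pos \<pi>" using T_sub j by simp
    show ?thesis using psi_subc[OF A] psi_subc[OF B] cS_eq[OF A] sig_sgn[OF j] by simp
  next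
    assume "j \<in> fix_pos \<sigma>" then show ?thesis using fix_sig by simp
  next
    assume A: "j \<in> exc_pos \<sigma>"
    then have B: "L!j \<in> exc_pos \<pi>" using T_exc j by simp
    show ?thesis using psi_exc[OF A] psi_exc[OF B] cE_eq[OF A] by simp
  qed
qed

end


lemma gamma_len: "s_num \<sigma> + e_num \<sigma> \<le> n \<Longrightarrow> length (gamma_word n \<sigma>) = n - (s_num \<sigma> + e_num \<sigma>)"
  unfolding gamma_word_def by simp

lemma gamma_nth: "s_num \<sigma> + e_num \<sigma> \<le> n \<Longrightarrow> m < n - (s_num \<sigma> + e_num \<sigma>) \<Longrightarrow>
    gamma_word n \<sigma> ! m = int (s_num \<sigma> + Suc m)"
  unfolding gamma_word_def by (subst nth_upto) auto

lemma gamma_notPv: "x \<in> set (gamma_word n \<sigma>) \<Longrightarrow> \<not> Pv n \<sigma> x"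
  unfolding gamma_word_def Pv_def by auto

context fw begin

definition LF where "LF = filter (\<lambda>i. \<pi>!i = int (i+1)) [0..<n]"

lemma LF_set: "set LF = fix_pos \<pi>" unfolding LF_def fix_pos_def len_pi by auto
lemma LF_ss: "sorted_wrt (<) LF" unfolding LF_def by (rule filter_upt_ss)
lemma LF_len: "length LF = n - k"
proof -
  have "length L + length LF = n" unfolding L_def LF_def
    using sum_length_filter_compl[of "\<lambda>i. \<pi>!i \<noteq> int (i+1)" "[0..<n]"] by simp
  then show ?thesis using kL by simp
qed

lemma psi_LF: "m < n - k \<Longrightarrow> psi n \<pi> ! (LF!m) = int (s_num \<sigma> + Suc m)"
proof -
  assume m: "m < n - k"
  have mem: "LF!m \<in> fix_pos \<pi>" using LF_set nth_mem[of m LF] LF_len m by auto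
  have "{j' \<in> fix_pos \<pi>. \<pi>!j' \<le> \<pi>!(LF!m)} = {x\<in>set LF. x \<le> LF!m}"
    using mem unfolding LF_set by (auto simp: fix_pos_def)
  then have "cF \<pi> (LF!m) = Suc m" unfolding cF_def using ss_rank_le[OF LF_ss, of m] LF_len m by simp
  then show ?thesis using psi_fix[OF mem] s_eq by simp
qed

lemma F1: "i < n \<Longrightarrow> Pv n \<sigma> (psi n \<pi> ! i) \<longleftrightarrow> \<pi>!i \<noteq> int (i+1)"
proof -
  assume i: "i < n"
  show ?thesis
  proof (cases "\<pi>!i = int (i+1)")
    case True
    then have A: "i \<in> fix_pos \<pi>" using i len_pi by (auto simp: fix_pos_def)
    have "s_num \<pi> + card (fix_pos \<pi>) + e_num \<pi> = n" using pos_card[of \<pi>] len_pi by simp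
    then show ?thesis using psi_fix[OF A, of n] cF_bounds[OF A] True s_eq e_eq unfolding Pv_def by auto
  next
    case False
    then have "i \<in> set L" using L_set i by auto
    then obtain j where j: "j < k" "i = L!j" using setL_conv by auto
    then have "psi n \<pi> ! i = psi n \<sigma> ! j" using psi_L by simp
    moreover have "psi n \<sigma> ! j \<in> set (psi n \<sigma>)" using j len_sig by simp
    ultimately show ?thesis using psi_sig_Pv False by simp
  qed
qed

lemma L_map: "L = map (nth L) [0..<k]" using kL map_nth[of L] by simp
lemma LF_map: "LF = map (nth LF) [0..<n-k]" using LF_len map_nth[of LF] by simp

lemma psi_pi_map: "psi n \<pi> = map (nth (psi n \<pi>)) [0..<n]" using map_nth[of "psi n \<pi>"] len_pi by simp

lemma F2: "filter (Pv n \<sigma>) (psi n \<pi>) = psi n \<sigma>"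
proof -
  have "filter (Pv n \<sigma>) (psi n \<pi>) = map (nth (psi n \<pi>)) (filter (\<lambda>i. Pv n \<sigma> (psi n \<pi> ! i)) [0..<n])"
    by (subst psi_pi_map) (simp add: filter_map o_def)
  also have "filter (\<lambda>i. Pv n \<sigma> (psi n \<pi> ! i)) [0..<n] = L"
    unfolding L_def by (rule filter_cong) (auto simp: F1)
  also have "map (nth (psi n \<pi>)) L = map (\<lambda>j. psi n \<pi> ! (L!j)) [0..<k]"
    by (subst L_map) simp
  also have "\<dots> = map (nth (psi n \<sigma>)) [0..<k]" by (rule map_cong) (auto simp: psi_L)
  also have "\<dots> = psi n \<sigma>" using map_nth[of "psi n \<sigma>"] len_sig by simp
  finally show ?thesis .
qed

lemma F3: "filter (\<lambda>x. \<not> Pv n \<sigma> x) (psi n \<pi>) = gamma_word n \<sigma>"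
proof -
  have "filter (\<lambda>x. \<not> Pv n \<sigma> x) (psi n \<pi>) = map (nth (psi n \<pi>)) (filter (\<lambda>i. \<not> Pv n \<sigma> (psi n \<pi> ! i)) [0..<n])"
    by (subst psi_pi_map) (simp add: filter_map o_def)
  also have "filter (\<lambda>i. \<not> Pv n \<sigma> (psi n \<pi> ! i)) [0..<n] = LF"
    unfolding LF_def by (rule filter_cong) (auto simp: F1)
  also have "map (nth (psi n \<pi>)) LF = map (\<lambda>m. psi n \<pi> ! (LF!m)) [0..<n-k]"
    by (subst LF_map) simp
  also have "\<dots> = map (\<lambda>m. int (s_num \<sigma> + Suc m)) [0..<n-k]" by (rule map_cong) (auto simp: psi_LF)
  also have "\<dots> = gamma_word n \<sigma>"
    by (rule nth_equalityI) (use gamma_len[OF ne_k] gamma_nth[OF ne_k] sig_k in auto)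
  finally show ?thesis .
qed

lemma psi_in_shuffles: "psi n \<pi> \<in> shuffles (psi n \<sigma>) (gamma_word n \<sigma>)"
proof -
  have "partition (Pv n \<sigma>) -` {(psi n \<sigma>, gamma_word n \<sigma>)} = shuffles (psi n \<sigma>) (gamma_word n \<sigma>)"
    by (rule inv_image_partition) (auto simp: psi_sig_Pv gamma_notPv)
  moreover have "psi n \<pi> \<in> partition (Pv n \<sigma>) -` {(psi n \<sigma>, gamma_word n \<sigma>)}"
    using F2 F3 by (simp add: o_def)
  ultimately show ?thesis by simp
qed

lemma last_L: "\<pi>!(n-1) \<noteq> int n \<Longrightarrow> L!(k-1) = n-1"
proof -
  assume h: "\<pi>!(n-1) \<noteq> int n"
  have n0: "n > 0" using kn k1 by simp
  then have "[0..<n] = [0..<n-1] @ [n-1]" by (metis Suc_diff_1 upt_Suc_append zero_le)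
  then have "L = filter (\<lambda>i. \<pi>!i \<noteq> int (i+1)) [0..<n-1] @ [n-1]" unfolding L_def using h n0 by simp
  then have "last L = n-1" by simp
  then show ?thesis using kL k1 last_conv_nth[of L] by (metis One_nat_def list.size(3) not_one_le_zero)
qed

lemma psi_last: "\<pi>!(n-1) \<noteq> int n \<Longrightarrow> last (psi n \<pi>) = last (psi n \<sigma>)"
proof -
  assume h: "\<pi>!(n-1) \<noteq> int n"
  have "length (psi n \<pi>) \<noteq> 0" using kn k1 len_pi by simp
  then have "psi n \<pi> \<noteq> []" by (metis list.size(3))
  then have "last (psi n \<pi>) = psi n \<pi> ! (n-1)" using len_pi by (simp add: last_conv_nth)
  also have "\<dots> = psi n \<sigma> ! (k-1)" using psi_L[of "k-1"] last_L[OF h] k1 by simp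
  also have "\<dots> = last (psi n \<sigma>)"
  proof -
    have "length (psi n \<sigma>) \<noteq> 0" using k1 len_sig by simp
    then have "psi n \<sigma> \<noteq> []" by (metis list.size(3))
    then show ?thesis using len_sig by (simp add: last_conv_nth)
  qed
  finally show ?thesis .
qed

end


lemma Delta_fw: "\<pi> \<in> Delta_lt n \<sigma> \<Longrightarrow> \<sigma> \<in> derangD k \<Longrightarrow> 1 \<le> k \<Longrightarrow> k \<le> n \<Longrightarrow> fw n k \<sigma> \<pi>"
  unfolding Delta_lt_def B_def by (unfold_locales) auto

lemma Delta_last: "\<pi> \<in> Delta_lt n \<sigma> \<Longrightarrow> 1 \<le> n \<Longrightarrow> \<pi>!(n-1) \<noteq> int n"
proof -
  assume a: "\<pi> \<in> Delta_lt n \<sigma>" "1 \<le> n"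
  then have "length \<pi> = n" "last \<pi> < int n" unfolding Delta_lt_def B_def signed_perm_def by auto
  moreover have "\<pi> \<noteq> []" using a calculation by auto
  ultimately show ?thesis by (simp add: last_conv_nth)
qed

lemma psi_inj:
  assumes p1: "\<pi>1 \<in> Delta_lt n \<sigma>" and p2: "\<pi>2 \<in> Delta_lt n \<sigma>" and d: "\<sigma> \<in> derangD k" and k1: "1 \<le> k" and kn: "k \<le> n"
    and eq: "psi n \<pi>1 = psi n \<pi>2"
  shows "\<pi>1 = \<pi>2"
proof -
  interpret f1: fw n k \<sigma> \<pi>1 by (rule Delta_fw[OF p1 d k1 kn])
  interpret f2: fw n k \<sigma> \<pi>2 by (rule Delta_fw[OF p2 d k1 kn])
  have nf: "i < n \<Longrightarrow> \<pi>1!i \<noteq> int (i+1) \<longleftrightarrow> \<pi>2!i \<noteq> int (i+1)" for i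
    using f1.F1[of i] f2.F1[of i] eq by simp
  have LL: "f1.L = f2.L" unfolding f1.L_def f2.L_def by (rule filter_cong) (use nf in auto)
  have AA: "f1.A0 = f2.A0" unfolding f1.A0_def f2.A0_def LL ..
  have PP: "f1.phi = f2.phi" unfolding f1.phi_def[abs_def] f2.phi_def[abs_def] AA ..
  show ?thesis
  proof (rule nth_equalityI)
    show "length \<pi>1 = length \<pi>2" using f1.len_pi f2.len_pi by simp
  next
    fix i assume "i < length \<pi>1"
    then have i: "i < n" using f1.len_pi by simp
    show "\<pi>1!i = \<pi>2!i"
    proof (cases "\<pi>1!i = int (i+1)")
      case True
      then show ?thesis using nf[OF i] by simp
    next
      case False
      then have "i \<in> set f1.L" using f1.L_set i by auto
      then obtain j where j: "j < k" "i = f1.L!j" using f1.setL_conv by auto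
      have j2: "i = f2.L!j" using j LL by simp
      have "int (f1.phi \<bar>\<pi>1!i\<bar>) = int (f1.phi \<bar>\<pi>2!i\<bar>)"
        using f1.sig_abs[OF j(1)] f2.sig_abs[OF j(1)] j j2 PP by simp
      then have pe: "f1.phi \<bar>\<pi>1!i\<bar> = f1.phi \<bar>\<pi>2!i\<bar>" by simp
      have m1: "\<bar>\<pi>1!i\<bar> \<in> f1.A0" using f1.absL_in_A0[OF j(1)] j by simp
      have m2: "\<bar>\<pi>2!i\<bar> \<in> f1.A0" using f2.absL_in_A0[OF j(1)] j2 AA by simp
      have "\<bar>\<pi>1!i\<bar> = \<bar>\<pi>2!i\<bar>"
        using f1.phi_less_iff[OF m1 m2] f1.phi_less_iff[OF m2 m1] pe by (metis linorder_neqE order.irrefl)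
      moreover have "sgn (\<pi>1!i) = sgn (\<pi>2!i)" using f1.sig_sgn[OF j(1)] f2.sig_sgn[OF j(1)] j j2 by simp
      ultimately show ?thesis by (metis sgn_mult_abs)
    qed
  qed
qed



locale sa = sg +
  fixes \<alpha> :: "int list"
  assumes shuf: "\<alpha> \<in> shuffles (psi n \<sigma>) (gamma_word n \<sigma>)" and lasta: "last \<alpha> = last (psi n \<sigma>)"
begin

lemma fab: "filter (Pv n \<sigma>) \<alpha> = psi n \<sigma> \<and> filter (\<lambda>x. \<not> Pv n \<sigma> x) \<alpha> = gamma_word n \<sigma>"
proof -
  have "partition (Pv n \<sigma>) -` {(psi n \<sigma>, gamma_word n \<sigma>)} = shuffles (psi n \<sigma>) (gamma_word n \<sigma>)"
    by (rule inv_image_partition) (auto simp: psi_sig_Pv gamma_notPv)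
  then show ?thesis using shuf by (auto simp: o_def)
qed

lemma len_a: "length \<alpha> = n"
  using length_shuffles[OF shuf] gamma_len[OF ne_k] sig_k len_sig kn by simp

definition La where "La = filter (\<lambda>i. Pv n \<sigma> (\<alpha>!i)) [0..<n]"
definition r where "r i = card {i'. i' < i \<and> Pv n \<sigma> (\<alpha>!i')}"
definition a where "a j = nat \<bar>\<sigma>!j\<bar> - 1"
definition tau where "tau i = (if Pv n \<sigma> (\<alpha>!i) then La ! a (r i) else i)"
definition p0 where "p0 = map (\<lambda>i. if Pv n \<sigma> (\<alpha>!i) then sgn (\<sigma>!(r i)) * int (La ! a (r i) + 1) else int (i+1)) [0..<n]"

lemma a_map: "\<alpha> = map (nth \<alpha>) [0..<n]" using map_nth[of \<alpha>] len_a by simp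

lemma kLa: "length La = k"
proof -
  have "filter (Pv n \<sigma>) \<alpha> = map (nth \<alpha>) La" unfolding La_def by (subst a_map) (simp add: filter_map o_def)
  then show ?thesis using fab len_sig by (metis length_map psi_length)
qed

lemma La_ss: "sorted_wrt (<) La" unfolding La_def by (rule filter_upt_ss)
lemma La_dist: "distinct La" using La_ss strict_sorted_iff by blast
lemma La_set: "set La = {i. i < n \<and> Pv n \<sigma> (\<alpha>!i)}" unfolding La_def by auto
lemma La_lt: "j < k \<Longrightarrow> La!j < n \<and> Pv n \<sigma> (\<alpha>!(La!j))" using nth_mem[of j La] kLa La_set by auto

lemma S1: "i < n \<Longrightarrow> Pv n \<sigma> (\<alpha>!i) \<Longrightarrow> r i < k \<and> La ! r i = i"
proof -
  assume i: "i < n" "Pv n \<sigma> (\<alpha>!i)"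
  have e: "La ! r i = i" unfolding La_def r_def by (rule filter_upt_nth_rank[where P="\<lambda>i. Pv n \<sigma> (\<alpha>!i)", OF i])
  have "i \<in> set La" using La_set i by auto
  then obtain j where "j < k" "La!j = i" using kLa by (auto simp: in_set_conv_nth)
  moreover have "r (La!j) = j" if "j < k" for j
    unfolding r_def La_def using filter_upt_rank_nth[of j] kLa that unfolding La_def by simp
  ultimately show ?thesis using e by auto
qed

lemma S2: "j < k \<Longrightarrow> r (La!j) = j"
  unfolding r_def La_def using filter_upt_rank_nth[of j] kLa unfolding La_def by simp

lemma sig_range: "j < k \<Longrightarrow> 1 \<le> \<bar>\<sigma>!j\<bar> \<and> \<bar>\<sigma>!j\<bar> \<le> int k"
  using sp_abs_range[OF sig_sp, of j] len_sig by simp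

lemma a_lt: "j < k \<Longrightarrow> a j < k" unfolding a_def using sig_range[of j] by auto
lemma a_abs: "j < k \<Longrightarrow> \<bar>\<sigma>!j\<bar> = int (Suc (a j))" unfolding a_def using sig_range[of j] by auto
lemma a_inj: "j < k \<Longrightarrow> j' < k \<Longrightarrow> a j = a j' \<Longrightarrow> j = j'"
  using a_abs[of j] a_abs[of j'] sp_abs_inj[OF sig_sp, of j j'] len_sig by simp
lemma sig_nz: "j < k \<Longrightarrow> \<sigma>!j \<noteq> 0" using sig_range[of j] by auto

lemma len_p0: "length p0 = n" unfolding p0_def by simp

lemma p0_nth: "i < n \<Longrightarrow> p0 ! i = (if Pv n \<sigma> (\<alpha>!i) then sgn (\<sigma>!(r i)) * int (La ! a (r i) + 1) else int (i+1))"
  unfolding p0_def by simp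

lemma p0_abs: "i < n \<Longrightarrow> \<bar>p0 ! i\<bar> = int (tau i + 1)"
  using p0_nth[of i] S1[of i] sig_nz unfolding tau_def by (auto simp: abs_mult abs_sgn_eq)

lemma p0_nz: "i < n \<Longrightarrow> p0 ! i \<noteq> 0" using p0_abs[of i] by auto

lemma p0_fix: "i < n \<Longrightarrow> p0 ! i \<noteq> int (i+1) \<longleftrightarrow> Pv n \<sigma> (\<alpha>!i)"
proof -
  assume i: "i < n"
  show ?thesis
  proof (cases "Pv n \<sigma> (\<alpha>!i)")
    case False then show ?thesis using p0_nth[OF i] by simp
  next
    case True
    define j where "j = r i"
    have j: "j < k" "La!j = i" using S1[OF i True] j_def by auto
    have "p0 ! i \<noteq> int (i+1)"
    proof
      assume h: "p0 ! i = int (i+1)"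
      then have h2: "sgn (\<sigma>!j) * int (La ! a j + 1) = int (i+1)" using p0_nth[OF i] True j_def by simp
      have sp: "\<sigma>!j > 0"
      proof (rule ccontr)
        assume "\<not> \<sigma>!j > 0" then have "\<sigma>!j < 0" using sig_nz[OF j(1)] by simp
        then show False using h2 by simp
      qed
      then have "La ! a j = La ! j" using h2 j by simp
      then have "a j = j" using nth_eq_iff_index_eq[OF La_dist] a_lt[OF j(1)] j(1) kLa by simp
      then have "\<sigma>!j = int (j+1)" using a_abs[OF j(1)] sp by simp
      then show False using sig_der[OF j(1)] by simp
    qed
    then show ?thesis using True by simp
  qed
qed

lemma tau_lt: "i < n \<Longrightarrow> tau i < n"
  unfolding tau_def using S1[of i] La_lt a_lt by auto

lemma tau_inj: "inj_on tau {..<n}"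
proof (rule inj_onI)
  fix i i' assume i: "i \<in> {..<n}" and i': "i' \<in> {..<n}" and e: "tau i = tau i'"
  have i1: "i < n" and i1': "i' < n" using i i' by auto
  show "i = i'"
  proof (cases "Pv n \<sigma> (\<alpha>!i)"; cases "Pv n \<sigma> (\<alpha>!i')")
    assume A: "Pv n \<sigma> (\<alpha>!i)" and B: "Pv n \<sigma> (\<alpha>!i')"
    have "La ! a (r i) = La ! a (r i')" using e A B unfolding tau_def by simp
    then have "a (r i) = a (r i')" using nth_eq_iff_index_eq[OF La_dist] a_lt S1[OF i1 A] S1[OF i1' B] kLa by simp
    then have "r i = r i'" using a_inj S1[OF i1 A] S1[OF i1' B] by simp
    then show ?thesis using S1[OF i1 A] S1[OF i1' B] by metis
  next
    assume A: "Pv n \<sigma> (\<alpha>!i)" and B: "\<not> Pv n \<sigma> (\<alpha>!i')"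
    have "tau i = La ! a (r i)" using A unfolding tau_def by simp
    then have "Pv n \<sigma> (\<alpha>!tau i)" using La_lt a_lt S1[OF i1 A] by simp
    moreover have "tau i' = i'" using B unfolding tau_def by simp
    ultimately show ?thesis using e B by simp
  next
    assume A: "\<not> Pv n \<sigma> (\<alpha>!i)" and B: "Pv n \<sigma> (\<alpha>!i')"
    have "tau i' = La ! a (r i')" using B unfolding tau_def by simp
    then have "Pv n \<sigma> (\<alpha>!tau i')" using La_lt a_lt S1[OF i1' B] by simp
    moreover have "tau i = i" using A unfolding tau_def by simp
    ultimately show ?thesis using e A by simp
  next
    assume A: "\<not> Pv n \<sigma> (\<alpha>!i)" and B: "\<not> Pv n \<sigma> (\<alpha>!i')"
    then show ?thesis using e unfolding tau_def by simp
  qed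
qed

lemma tau_surj: "tau ` {..<n} = {..<n}"
  using tau_inj tau_lt by (intro endo_inj_surj) auto

lemma p0_sp: "signed_perm n p0"
proof -
  have ma: "map abs p0 = map (\<lambda>i. int (tau i + 1)) [0..<n]"
    by (rule nth_equalityI) (auto simp: len_p0 p0_abs)
  have "inj_on (\<lambda>i. int (tau i + 1)) {..<n}" using tau_inj by (auto simp: inj_on_def)
  then have d: "distinct (map abs p0)" unfolding ma by (simp add: distinct_map lessThan_atLeast0)
  have "set (map abs p0) = (\<lambda>i. int (i + 1)) ` tau ` {..<n}" unfolding ma by (auto simp: lessThan_atLeast0)
  also have "\<dots> = {1..int n}" unfolding tau_surj
  proof (intro equalityI subsetI)
    fix x assume "x \<in> {1..int n}"
    then have "x = int (nat x - 1 + 1)" "nat x - 1 < n" by auto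
    then show "x \<in> (\<lambda>i. int (i + 1)) ` {..<n}" by blast
  qed auto
  finally have "set (map abs p0) = {1..int n}" .
  moreover have "0 \<notin> set p0" using p0_nz len_p0 by (auto simp: in_set_conv_nth)
  ultimately show ?thesis unfolding signed_perm_def using d len_p0 by simp
qed

end


context sa begin

lemma nf_La: "filter (\<lambda>i. p0!i \<noteq> int (i+1)) [0..<n] = La"
  unfolding La_def by (rule filter_cong) (use p0_fix in auto)

lemma La_map: "La = map (nth La) [0..<k]" using kLa map_nth[of La] by simp

lemma ns_p0: "nonfixed_subword p0 = map (\<lambda>j. sgn (\<sigma>!j) * int (La ! a j + 1)) [0..<k]"
proof -
  have "nonfixed_subword p0 = map (nth p0) La" unfolding nonfixed_subword_conv len_p0 nf_La ..
  also have "\<dots> = map (\<lambda>j. p0 ! (La!j)) [0..<k]" by (subst La_map) simp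
  also have "\<dots> = map (\<lambda>j. sgn (\<sigma>!j) * int (La ! a j + 1)) [0..<k]"
    by (rule map_cong) (auto simp: p0_nth La_lt S2)
  finally show ?thesis .
qed

lemma a_surj: "a ` {..<k} = {..<k}"
  using a_inj a_lt by (intro endo_inj_surj) (auto simp: inj_on_def)

lemma dp_p0: "dp p0 = \<sigma>"
proof -
  let ?v = "map (\<lambda>j. sgn (\<sigma>!j) * int (La ! a j + 1)) [0..<k]"
  have absv: "abs ` set ?v = (\<lambda>m. int (La ! m + 1)) ` {..<k}"
  proof -
    have "abs ` set ?v = (\<lambda>j. int (La ! a j + 1)) ` {..<k}"
      using sig_nz by (auto simp: abs_mult abs_sgn_eq image_image lessThan_atLeast0)
    also have "\<dots> = (\<lambda>m. int (La ! m + 1)) ` a ` {..<k}" by (simp add: image_image)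
    finally show ?thesis unfolding a_surj .
  qed
  have "red ?v = \<sigma>"
  proof (rule nth_equalityI)
    show "length (red ?v) = length \<sigma>" using len_sig by simp
  next
    fix j assume "j < length (red ?v)"
    then have j: "j < k" by simp
    have av: "\<bar>?v!j\<bar> = int (La ! a j + 1)" using j sig_nz[OF j] by (simp add: abs_mult abs_sgn_eq)
    have "{y \<in> abs ` set ?v. y \<le> \<bar>?v!j\<bar>} = (\<lambda>m. int (m + 1)) ` {x \<in> set La. x \<le> La ! a j}"
      unfolding absv av using kLa by (auto simp: in_set_conv_nth)
    moreover have "inj_on (\<lambda>m. int (m + 1)) {x \<in> set La. x \<le> La ! a j}" by (auto simp: inj_on_def)
    ultimately have "card {y \<in> abs ` set ?v. y \<le> \<bar>?v!j\<bar>} = Suc (a j)"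
      using ss_rank_le[OF La_ss, of "a j"] a_lt[OF j] kLa by (simp add: card_image)
    moreover have "sgn (?v!j) = sgn (\<sigma>!j)" using j by (simp add: sgn_mult)
    ultimately have "red ?v ! j = sgn (\<sigma>!j) * int (Suc (a j))" using j by (simp add: red_nth)
    also have "\<dots> = sgn (\<sigma>!j) * \<bar>\<sigma>!j\<bar>" using a_abs[OF j] by simp
    also have "\<dots> = \<sigma>!j" by (rule sgn_mult_abs)
    finally show "red ?v ! j = \<sigma>!j" .
  qed
  then show ?thesis unfolding dp_def ns_p0 .
qed

lemma n1: "1 \<le> n" using k1 kn by simp

lemma alast: "Pv n \<sigma> (\<alpha>!(n-1))"
proof -
  have "length \<alpha> \<noteq> 0" using len_a n1 by simp
  then have "\<alpha> \<noteq> []" by (metis list.size(3))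
  then have "\<alpha>!(n-1) = last (psi n \<sigma>)" using lasta len_a by (simp add: last_conv_nth)
  moreover have "psi n \<sigma> \<noteq> []"
  proof -
    have "length (psi n \<sigma>) \<noteq> 0" using len_sig k1 by simp
    then show ?thesis by (metis list.size(3))
  qed
  ultimately show ?thesis using psi_sig_Pv by simp
qed

lemma La_last: "La ! (k-1) = n-1"
proof -
  have "[0..<n] = [0..<n-1] @ [n-1]" using n1 by (metis Suc_diff_1 less_le_trans zero_less_one upt_Suc_append zero_le)
  then have "La = filter (\<lambda>i. Pv n \<sigma> (\<alpha>!i)) [0..<n-1] @ [n-1]" unfolding La_def using alast by simp
  then have "last La = n-1" by simp
  moreover have "La \<noteq> []" using kLa k1 by auto
  ultimately show ?thesis using kLa last_conv_nth[of La] by simp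
qed

lemma p0_last: "0 < last p0 \<and> last p0 < int n"
proof -
  have "length p0 \<noteq> 0" using len_p0 n1 by simp
  then have "p0 \<noteq> []" by (metis list.size(3))
  then have lp: "last p0 = p0 ! (n-1)" using len_p0 by (simp add: last_conv_nth)
  have k1': "k - 1 < k" using k1 by simp
  have rr: "r (n-1) = k-1" using S2[OF k1'] La_last by simp
  have "\<sigma> \<noteq> []" using len_sig k1 by auto
  then have "\<sigma>!(k-1) > 0" using sig_last len_sig by (simp add: last_conv_nth)
  then have v: "p0 ! (n-1) = int (La ! a (k-1) + 1)" using p0_nth[of "n-1"] n1 alast rr by simp
  have "La ! a (k-1) < n" using La_lt a_lt[OF k1'] by simp
  moreover have "p0 ! (n-1) \<noteq> int n" using p0_fix[of "n-1"] alast n1 by simp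
  ultimately show ?thesis using v lp by simp
qed

lemma p0_Delta: "p0 \<in> Delta_lt n \<sigma>"
  unfolding Delta_lt_def B_def using p0_sp dp_p0 p0_last by simp

lemma psi_p0: "psi n p0 = \<alpha>"
proof -
  interpret f: fw n k \<sigma> p0 by unfold_locales (use p0_sp dp_p0 in auto)
  show ?thesis
  proof (rule list_eq_by_filters[where P="Pv n \<sigma>"])
    show "length (psi n p0) = length \<alpha>" using len_p0 len_a by simp
    show "\<forall>i<length (psi n p0). Pv n \<sigma> (psi n p0 ! i) = Pv n \<sigma> (\<alpha> ! i)"
      using f.F1 p0_fix len_p0 by simp
    show "filter (Pv n \<sigma>) (psi n p0) = filter (Pv n \<sigma>) \<alpha>" using f.F2 fab by simp
    show "filter (\<lambda>x. \<not> Pv n \<sigma> x) (psi n p0) = filter (\<lambda>x. \<not> Pv n \<sigma> x) \<alpha>" using f.F3 fab by simp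
  qed
qed

end


theorem lemma5p6:
  fixes n k :: nat and \<sigma> :: "int list"
  assumes "1 \<le> k" "k \<le> n" "\<sigma> \<in> derangD k"
  shows "bij_betw (psi n) (Delta_lt n \<sigma>)
           {\<alpha>. \<alpha> \<in> shuffles (psi n \<sigma>) (gamma_word n \<sigma>) \<and> last \<alpha> = last (psi n \<sigma>)}
         \<and> (\<forall>\<pi> \<in> Delta_lt n \<sigma>. fmaj \<pi> = fmaj (psi n \<pi>))"
proof
  interpret s: sg n k \<sigma> by unfold_locales (use assms in auto)
  show "bij_betw (psi n) (Delta_lt n \<sigma>)
           {\<alpha>. \<alpha> \<in> shuffles (psi n \<sigma>) (gamma_word n \<sigma>) \<and> last \<alpha> = last (psi n \<sigma>)}"
    unfolding bij_betw_def
  proof (intro conjI)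
    show "inj_on (psi n) (Delta_lt n \<sigma>)"
      by (rule inj_onI) (rule psi_inj[OF _ _ assms(3,1,2)])
  next
    show "psi n ` Delta_lt n \<sigma> = {\<alpha>. \<alpha> \<in> shuffles (psi n \<sigma>) (gamma_word n \<sigma>) \<and> last \<alpha> = last (psi n \<sigma>)}"
    proof (intro equalityI subsetI)
      fix x assume "x \<in> psi n ` Delta_lt n \<sigma>"
      then obtain \<pi> where p: "\<pi> \<in> Delta_lt n \<sigma>" "x = psi n \<pi>" by auto
      interpret f: fw n k \<sigma> \<pi> by (rule Delta_fw[OF p(1) assms(3,1,2)])
      have "\<pi>!(n-1) \<noteq> int n" using Delta_last[OF p(1)] assms by simp
      then show "x \<in> {\<alpha>. \<alpha> \<in> shuffles (psi n \<sigma>) (gamma_word n \<sigma>) \<and> last \<alpha> = last (psi n \<sigma>)}"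
        using f.psi_in_shuffles f.psi_last p(2) by simp
    next
      fix x assume "x \<in> {\<alpha>. \<alpha> \<in> shuffles (psi n \<sigma>) (gamma_word n \<sigma>) \<and> last \<alpha> = last (psi n \<sigma>)}"
      then have x: "x \<in> shuffles (psi n \<sigma>) (gamma_word n \<sigma>)" "last x = last (psi n \<sigma>)" by auto
      interpret t: sa n k \<sigma> x by unfold_locales (use x in auto)
      show "x \<in> psi n ` Delta_lt n \<sigma>" using t.p0_Delta t.psi_p0 by force
    qed
  qed
next
  show "\<forall>\<pi> \<in> Delta_lt n \<sigma>. fmaj \<pi> = fmaj (psi n \<pi>)"
    using fmaj_pres by (auto simp: Delta_lt_def B_def)
qed


end
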